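(* For every $\mathbf x\in[-\alpha,1]^n$ there is a unique $\lambda\in\mathcal P(\mathbf x)$ whose support $\{\mathbf a\in D^n:\lambda(\mathbf a)>0\}$ forms a chain in $D^n$ with respect to $\preceq$ (i.e. any two elements of the support are comparable).
   Context: Fix $\alpha\in(0,1]$ and $D=\{-\alpha,0,1\}\subset\mathbb R$. Define the partial order $\preceq$ on $D$ by $0\preceq 1$, $0\preceq -\alpha$ (plus reflexivity), with $1$ and $-\alpha$ incomparable; extend it componentwise to $D^n$. For $\mathbf x\in[-\alpha,1]^n$, let $\mathcal P(\mathbf x)$ be the set of all functions $\lambda:D^n\to[0,1]$ with $\sum_{\mathbf a\in D^n}\lambda(\mathbf a)=1$ and $\sum_{\mathbf a\in D^n}\lambda(\mathbf a)\,\mathbf a=\mathbf x$ (vectors in $D^n\subset\mathbb R^n$), i.e. probability distributions on $D^n$ with mean $\mathbf x$. *)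

theory Defs
  imports "HOL-Analysis.Analysis"
begin

definition Dset :: "real \<Rightarrow> real set" where
  "Dset \<alpha> = {-\<alpha>, 0, 1}"

definition Dn :: "real \<Rightarrow> (real^'n) set" where
  "Dn \<alpha> = {a. \<forall>i. a $ i \<in> Dset \<alpha>}"

definition Dle :: "real \<Rightarrow> real \<Rightarrow> bool" where
  "Dle s t \<longleftrightarrow> s = t \<or> s = 0"

definition Dnle :: "real^'n \<Rightarrow> real^'n \<Rightarrow> bool" where
  "Dnle a b \<longleftrightarrow> (\<forall>i. Dle (a $ i) (b $ i))"

text \<open>Probability distributions on D^n with mean x. A function on D^n is
  represented as a function on real^'n that vanishes outside D^n.\<close>
definition Pmean :: "real \<Rightarrow> real^'n \<Rightarrow> (real^'n \<Rightarrow> real) set" where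
  "Pmean \<alpha> x = {l. (\<forall>a. a \<notin> Dn \<alpha> \<longrightarrow> l a = 0)
      \<and> (\<forall>a\<in>Dn \<alpha>. 0 \<le> l a \<and> l a \<le> 1)
      \<and> (\<Sum>a\<in>Dn \<alpha>. l a) = 1
      \<and> (\<Sum>a\<in>Dn \<alpha>. l a *\<^sub>R a) = x}"

definition support :: "real \<Rightarrow> (real^'n \<Rightarrow> real) \<Rightarrow> (real^'n) set" where
  "support \<alpha> l = {a \<in> Dn \<alpha>. l a > 0}"

definition is_chain :: "(real^'n) set \<Rightarrow> bool" where
  "is_chain S \<longleftrightarrow> (\<forall>a\<in>S. \<forall>b\<in>S. Dnle a b \<or> Dnle b a)"

end

theory Submission imports Defs begin

definition sgx :: "real \<Rightarrow> real^'n \<Rightarrow> 'n \<Rightarrow> real" where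
  "sgx \<alpha> x i = (if 0 \<le> x$i then 1 else -\<alpha>)"
definition px :: "real \<Rightarrow> real^'n \<Rightarrow> 'n \<Rightarrow> real" where
  "px \<alpha> x i = x$i / sgx \<alpha> x i"
definition mm :: "real \<Rightarrow> real^'n \<Rightarrow> 'n set \<Rightarrow> real" where
  "mm \<alpha> x I = (if I = {} then 1 else Min (px \<alpha> x ` I))"
definition MM :: "real \<Rightarrow> real^'n \<Rightarrow> 'n set \<Rightarrow> real" where
  "MM \<alpha> x J = (if J = {} then 0 else Max (px \<alpha> x ` J))"

lemma finite_Dn: "finite (Dn \<alpha> :: (real^'n) set)"
proof -
  have "Dn \<alpha> \<subseteq> (\<lambda>f. vec_lambda f) ` (PiE (UNIV::'n set) (\<lambda>_. Dset \<alpha>))"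
  proof
    fix a :: "real^'n" assume "a \<in> Dn \<alpha>"
    then have "(\<lambda>i. a$i) \<in> PiE UNIV (\<lambda>_. Dset \<alpha>)" by (auto simp: Dn_def)
    then show "a \<in> (\<lambda>f. vec_lambda f) ` PiE UNIV (\<lambda>_. Dset \<alpha>)" by (metis image_eqI vec_lambda_eta)
  qed
  moreover have "finite (PiE (UNIV::'n set) (\<lambda>_. Dset \<alpha>))"
    by (intro finite_PiE) (auto simp: Dset_def)
  ultimately show ?thesis by (meson finite_imageI finite_subset)
qed

lemma inD: "c \<in> Dn \<alpha> \<Longrightarrow> c$i = -\<alpha> \<or> c$i = 0 \<or> c$i = 1"
  by (auto simp: Dn_def Dset_def)

context
  fixes \<alpha> :: real and x :: "real^'n" and l :: "real^'n \<Rightarrow> real"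
  assumes apos: "0 < \<alpha>" and lP: "l \<in> Pmean \<alpha> x" and ch: "is_chain (support \<alpha> l)"
begin

lemma l_out: "a \<notin> Dn \<alpha> \<Longrightarrow> l a = 0" using lP by (auto simp: Pmean_def)
lemma l_nn: "0 \<le> l a" using lP by (cases "a \<in> Dn \<alpha>") (auto simp: Pmean_def)
lemma S_sub: "support \<alpha> l \<subseteq> Dn \<alpha>" by (auto simp: support_def)
lemma finS: "finite (support \<alpha> l)" using S_sub finite_Dn finite_subset by blast
lemma inS: "c \<in> support \<alpha> l \<Longrightarrow> 0 < l c" by (auto simp: support_def)

lemma sum_S: "(\<Sum>a\<in>Dn \<alpha>. l a * f a) = (\<Sum>a\<in>support \<alpha> l. l a * f a)"
proof (rule sum.mono_neutral_right[OF finite_Dn S_sub])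
  show "\<forall>i\<in>Dn \<alpha> - support \<alpha> l. l i * f i = 0"
    using l_nn by (auto simp: support_def) (metis antisym_conv2 l_nn)
qed

lemma mass1: "sum l (support \<alpha> l) = 1"
proof -
  have "sum l (Dn \<alpha>) = 1" using lP by (auto simp: Pmean_def)
  then show ?thesis using sum_S[of "\<lambda>_. 1"] by simp
qed

lemma massx: "(\<Sum>c\<in>support \<alpha> l. l c * c$i) = x$i"
proof -
  have "x = (\<Sum>a\<in>Dn \<alpha>. l a *\<^sub>R a)" using lP by (auto simp: Pmean_def)
  then have "x$i = (\<Sum>a\<in>Dn \<alpha>. l a * a$i)" by simp
  then show ?thesis using sum_S[of "\<lambda>a. a$i"] by simp
qed

lemma same: "c \<in> support \<alpha> l \<Longrightarrow> d \<in> support \<alpha> l \<Longrightarrow> c$i \<noteq> 0 \<Longrightarrow> d$i \<noteq> 0 \<Longrightarrow> d$i = c$i"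
  using ch unfolding is_chain_def Dnle_def Dle_def by metis

lemma consistent: assumes c: "c \<in> support \<alpha> l" and nz: "c$i \<noteq> 0" shows "c$i = sgx \<alpha> x i"
proof -
  define q where "q = (\<Sum>d\<in>support \<alpha> l. if d$i \<noteq> 0 then l d else 0)"
  have "x$i = (\<Sum>d\<in>support \<alpha> l. l d * d$i)" using massx by simp
  also have "\<dots> = (\<Sum>d\<in>support \<alpha> l. c$i * (if d$i \<noteq> 0 then l d else 0))"
    by (rule sum.cong) (auto dest: same[OF c _ nz])
  also have "\<dots> = c$i * q" by (simp add: q_def sum_distrib_left)
  finally have xq: "x$i = c$i * q" .
  have "l c \<le> q" unfolding q_def
    using member_le_sum[OF c, of "\<lambda>d. if d$i \<noteq> 0 then l d else 0"] finS nz l_nn by auto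
  then have qpos: "0 < q" using inS[OF c] by simp
  have "c$i = -\<alpha> \<or> c$i = 1" using inD[of c] c S_sub nz by blast
  then show ?thesis
  proof
    assume "c$i = -\<alpha>" then have "x$i < 0" using xq qpos apos by (simp add: mult_neg_pos)
    then show ?thesis using \<open>c$i = -\<alpha>\<close> by (simp add: sgx_def)
  next
    assume "c$i = 1" then have "x$i > 0" using xq qpos by simp
    then show ?thesis using \<open>c$i = 1\<close> by (simp add: sgx_def)
  qed
qed

lemma sg_nz: "sgx \<alpha> x i \<noteq> 0" using apos by (simp add: sgx_def)

lemma massA: "sum l {c \<in> support \<alpha> l. c$i \<noteq> 0} = px \<alpha> x i"
proof -
  have "x$i = (\<Sum>d\<in>support \<alpha> l. l d * d$i)" using massx by simp
  also have "\<dots> = (\<Sum>d\<in>support \<alpha> l. sgx \<alpha> x i * (if d$i \<noteq> 0 then l d else 0))"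
    by (rule sum.cong) (auto dest: consistent)
  also have "\<dots> = sgx \<alpha> x i * sum l {c \<in> support \<alpha> l. c$i \<noteq> 0}"
    by (simp add: sum_distrib_left[symmetric] sum.inter_filter[OF finS])
  finally show ?thesis using sg_nz by (simp add: px_def)
qed

lemma nested: "{c \<in> support \<alpha> l. c$i \<noteq> 0} \<subseteq> {c \<in> support \<alpha> l. c$j \<noteq> 0} \<or>
   {c \<in> support \<alpha> l. c$j \<noteq> 0} \<subseteq> {c \<in> support \<alpha> l. c$i \<noteq> 0}"
proof (rule ccontr)
  assume "\<not> ?thesis"
  then obtain c d where c: "c \<in> support \<alpha> l" "c$i \<noteq> 0" "c$j = 0"
    and d: "d \<in> support \<alpha> l" "d$j \<noteq> 0" "d$i = 0" by auto
  have "Dnle c d \<or> Dnle d c" using ch c d unfolding is_chain_def by blast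
  then show False using c d unfolding Dnle_def Dle_def by metis
qed

lemma mass_mono: "X \<subseteq> Y \<Longrightarrow> Y \<subseteq> support \<alpha> l \<Longrightarrow> sum l X \<le> sum l Y"
  by (rule sum_mono2) (auto intro: finite_subset[OF _ finS] l_nn)

lemma mass_strict: assumes "X \<subset> Y" "Y \<subseteq> support \<alpha> l" shows "sum l X < sum l Y"
proof -
  have fY: "finite Y" using assms finite_subset finS by blast
  obtain y where y: "y \<in> Y" "y \<notin> X" using assms by blast
  have "sum l Y = sum l X + sum l (Y - X)"
    using sum.subset_diff[OF _ fY, of X l] assms by auto
  moreover have "0 < sum l (Y - X)"
    using y fY assms inS l_nn by (intro sum_pos2[of _ y]) auto
  ultimately show ?thesis by simp
qed

lemma A_le: assumes "px \<alpha> x i \<le> px \<alpha> x j"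
  shows "{c \<in> support \<alpha> l. c$i \<noteq> 0} \<subseteq> {c \<in> support \<alpha> l. c$j \<noteq> 0}"
proof (rule ccontr)
  assume "\<not> ?thesis"
  then have "{c \<in> support \<alpha> l. c$j \<noteq> 0} \<subset> {c \<in> support \<alpha> l. c$i \<noteq> 0}"
    using nested[of i j] by blast
  then have "sum l {c \<in> support \<alpha> l. c$j \<noteq> 0} < sum l {c \<in> support \<alpha> l. c$i \<noteq> 0}"
    by (rule mass_strict) auto
  then show False using assms massA[of i] massA[of j] by simp
qed

lemma massT: "sum l {c \<in> support \<alpha> l. \<forall>i\<in>I. c$i \<noteq> 0} = mm \<alpha> x I"
proof (cases "I = {}")
  case True then show ?thesis using mass1 by (simp add: mm_def)
next
  case False
  have "Min (px \<alpha> x ` I) \<in> px \<alpha> x ` I" by (rule Min_in) (auto simp: False)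
  then obtain i0 where i0: "i0 \<in> I" "px \<alpha> x i0 = Min (px \<alpha> x ` I)" by auto
  have le: "\<forall>i\<in>I. px \<alpha> x i0 \<le> px \<alpha> x i" using i0 by simp
  have "{c \<in> support \<alpha> l. \<forall>i\<in>I. c$i \<noteq> 0} = {c \<in> support \<alpha> l. c$i0 \<noteq> 0}"
    using i0(1) A_le le by blast
  then show ?thesis using massA i0 False by (simp add: mm_def)
qed

lemma massB: "sum l {c \<in> support \<alpha> l. \<exists>j\<in>J. c$j \<noteq> 0} = MM \<alpha> x J"
proof (cases "J = {}")
  case True then show ?thesis by (simp add: MM_def)
next
  case False
  have "Max (px \<alpha> x ` J) \<in> px \<alpha> x ` J" by (rule Max_in) (auto simp: False)
  then obtain j0 where j0: "j0 \<in> J" "px \<alpha> x j0 = Max (px \<alpha> x ` J)" by auto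
  have le: "\<forall>j\<in>J. px \<alpha> x j \<le> px \<alpha> x j0" using j0 by simp
  have "{c \<in> support \<alpha> l. \<exists>j\<in>J. c$j \<noteq> 0} = {c \<in> support \<alpha> l. c$j0 \<noteq> 0}"
    using j0(1) A_le le by blast
  then show ?thesis using massA j0 False by (simp add: MM_def)
qed

lemma charac: assumes b: "b \<in> support \<alpha> l"
  shows "l b = mm \<alpha> x {i. b$i \<noteq> 0} - MM \<alpha> x {j. b$j = 0}"
proof -
  let ?T = "{c \<in> support \<alpha> l. \<forall>i\<in>{i. b$i \<noteq> 0}. c$i \<noteq> 0}"
  let ?B = "{c \<in> support \<alpha> l. \<exists>j\<in>{j. b$j = 0}. c$j \<noteq> 0}"
  have "?T = insert b ?B"
  proof (intro equalityI subsetI)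
    fix c assume c: "c \<in> ?T"
    show "c \<in> insert b ?B"
    proof (rule ccontr)
      assume nc: "c \<notin> insert b ?B"
      have "c = b"
      proof (rule vec_eq_iff[THEN iffD2], rule allI)
        fix i show "c$i = b$i"
          using c nc consistent[of c i] consistent[OF b, of i] by (cases "b$i = 0") auto
      qed
      then show False using nc by simp
    qed
  next
    fix c assume c: "c \<in> insert b ?B"
    show "c \<in> ?T"
    proof (cases "c = b")
      case True then show ?thesis using b by simp
    next
      case False
      then obtain j where cj: "c \<in> support \<alpha> l" "b$j = 0" "c$j \<noteq> 0" using c by auto
      have "Dnle c b \<or> Dnle b c" using ch cj(1) b unfolding is_chain_def by blast
      then have "Dnle b c" using cj unfolding Dnle_def Dle_def by metis
      then have "\<forall>i. b$i \<noteq> 0 \<longrightarrow> c$i \<noteq> 0" unfolding Dnle_def Dle_def by metis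
      then show ?thesis using cj(1) by blast
    qed
  qed
  moreover have "b \<notin> ?B" by auto
  moreover have "finite ?B" using finS by auto
  ultimately have e: "sum l ?T = l b + sum l ?B" by simp
  have e1: "sum l ?T = mm \<alpha> x {i. b$i \<noteq> 0}" by (rule massT)
  have e2: "sum l ?B = MM \<alpha> x {j. b$j = 0}" by (rule massB)
  show ?thesis using e unfolding e1 e2 by simp
qed

end


lemma uniq_pos:
  assumes apos: "0 < \<alpha>" and lP: "l \<in> Pmean \<alpha> x" and ch: "is_chain (support \<alpha> l)"
    and lP': "l' \<in> Pmean \<alpha> x" and ch': "is_chain (support \<alpha> l')" and pos: "0 < l b"
  shows "l' b = l b"
proof -
  have bD: "b \<in> Dn \<alpha>" using l_out[OF apos lP ch] pos by fastforce
  then have b: "b \<in> support \<alpha> l" using pos by (simp add: support_def)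
  let ?I = "{i. b$i \<noteq> 0}" and ?J = "{j. b$j = 0}"
  have lb: "l b = mm \<alpha> x ?I - MM \<alpha> x ?J" by (rule charac[OF apos lP ch b])
  let ?T = "{c \<in> support \<alpha> l'. \<forall>i\<in>?I. c$i \<noteq> 0}"
  let ?B = "{c \<in> support \<alpha> l'. \<exists>j\<in>?J. c$j \<noteq> 0}"
  have "sum l' ?T = mm \<alpha> x ?I" by (rule massT[OF apos lP' ch'])
  moreover have "sum l' ?B = MM \<alpha> x ?J" by (rule massB[OF apos lP' ch'])
  ultimately have "sum l' ?B < sum l' ?T" using lb pos by simp
  then have "\<not> ?T \<subseteq> ?B" using mass_mono[OF apos lP' ch', of ?T ?B] by auto
  then obtain c where c: "c \<in> support \<alpha> l'" "\<forall>i\<in>?I. c$i \<noteq> 0" "\<not> (\<exists>j\<in>?J. c$j \<noteq> 0)"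
    by blast
  have "c = b"
  proof (rule vec_eq_iff[THEN iffD2], rule allI)
    fix i show "c$i = b$i"
      using c consistent[OF apos lP' ch' c(1), of i] consistent[OF apos lP ch b, of i]
      by (cases "b$i = 0") auto
  qed
  then have b': "b \<in> support \<alpha> l'" using c by simp
  show ?thesis using charac[OF apos lP' ch' b'] lb by simp
qed

lemma uniq:
  assumes apos: "0 < \<alpha>" and lP: "l \<in> Pmean \<alpha> x" and ch: "is_chain (support \<alpha> l)"
    and lP': "l' \<in> Pmean \<alpha> x" and ch': "is_chain (support \<alpha> l')"
  shows "l = l'"
proof
  fix a
  show "l a = l' a"
  proof (cases "0 < l a")
    case True then show ?thesis using uniq_pos[OF assms] by simp
  next
    case False
    show ?thesis
    proof (cases "0 < l' a")
      case True then show ?thesis using uniq_pos[OF apos lP' ch' lP ch] by simp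
    next
      case False
      then show ?thesis using \<open>\<not> 0 < l a\<close> l_nn[OF apos lP ch, of a] l_nn[OF apos lP' ch', of a] by simp
    qed
  qed
qed

definition vv :: "real \<Rightarrow> real^'n \<Rightarrow> real \<Rightarrow> real^'n" where
  "vv \<alpha> x t = (\<chi> i. if t \<le> px \<alpha> x i then sgx \<alpha> x i else 0)"

lemma integral_step: "0 \<le> p \<Longrightarrow> p \<le> 1 \<Longrightarrow> integral {0..1::real} (\<lambda>t. if t \<le> p then s else 0) = s * p"
proof -
  assume h: "0 \<le> p" "p \<le> 1"
  have e: "(\<lambda>t. if t \<le> p then s else 0) = (\<lambda>t. s * indicat_real {..p} t)"
    by (auto simp: indicator_def)
  have m: "{..p} \<inter> {0..1} = {0..p}" using h by auto
  have "integral {0..1::real} (indicat_real {..p}) = measure lebesgue ({..p} \<inter> {0..1})"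
    by (rule integral_indicator) (simp add: m)
  also have "\<dots> = p" using h by (simp add: m)
  finally show ?thesis unfolding e by simp
qed

lemma existence:
  fixes \<alpha> :: real and x :: "real^'n"
  assumes apos: "0 < \<alpha>" and "\<alpha> \<le> 1"
    and xb: "\<forall>i. -\<alpha> \<le> x $ i \<and> x $ i \<le> 1"
  shows "\<exists>l. l \<in> Pmean \<alpha> x \<and> is_chain (support \<alpha> l)"
proof -
  let ?v = "vv \<alpha> x"
  have p01: "0 \<le> px \<alpha> x i \<and> px \<alpha> x i \<le> 1" for i
    using xb[rule_format, of i] apos
    by (auto simp: px_def sgx_def divide_nonpos_neg divide_le_eq)
  have sp: "sgx \<alpha> x i * px \<alpha> x i = x$i" for i
    using apos by (simp add: px_def sgx_def)
  have vD: "?v t \<in> Dn \<alpha>" for t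
    by (auto simp: vv_def Dn_def Dset_def sgx_def)
  define E where "E a = {t. ?v t = a}" for a
  have conv: "convex (E a)" for a
    unfolding is_interval_convex_1[symmetric] is_interval_1
  proof (intro ballI allI impI)
    fix t s r assume ts: "t \<in> E a" "s \<in> E a" "t \<le> r \<and> r \<le> s"
    have ta: "a $ i = ?v t $ i" and sa: "a $ i = ?v s $ i" for i using ts by (auto simp: E_def)
    have "?v r $ i = a $ i" for i
    proof (cases "r \<le> px \<alpha> x i")
      case True then have "t \<le> px \<alpha> x i" using ts by simp
      then show ?thesis using ta[of i] True by (simp add: vv_def)
    next
      case False then have "\<not> s \<le> px \<alpha> x i" using ts by simp
      then show ?thesis using sa[of i] False by (simp add: vv_def)
    qed
    then show "r \<in> E a" by (simp add: E_def vec_eq_iff)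
  qed
  have integ: "indicat_real (E a) integrable_on {0..1::real}" for a
    unfolding integrable_on_indicator
    by (rule measurable_convex) (auto intro: convex_Int conv bounded_Int)
  define l where "l a = (if a \<in> Dn \<alpha> then integral {0..1} (indicat_real (E a)) else 0)" for a
  have ind: "indicat_real (E a) t = (if ?v t = a then 1 else 0)" for a t
    by (simp add: E_def indicator_def)
  have nn: "0 \<le> l a" for a
    unfolding l_def using integ by (auto intro!: integral_nonneg simp: indicator_def)
  have s1: "(\<Sum>a\<in>Dn \<alpha>. l a) = 1"
  proof -
    have "(\<Sum>a\<in>Dn \<alpha>. l a) = (\<Sum>a\<in>Dn \<alpha>. integral {0..1} (indicat_real (E a)))"
      by (simp add: l_def)
    also have "\<dots> = integral {0..1} (\<lambda>t. \<Sum>a\<in>Dn \<alpha>. indicat_real (E a) t)"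
      by (rule integral_sum[symmetric]) (auto intro: finite_Dn integ)
    also have "\<dots> = integral {0..1::real} (\<lambda>t. 1)"
      by (simp add: ind finite_Dn vD)
    finally show ?thesis by simp
  qed
  have sx: "(\<Sum>a\<in>Dn \<alpha>. l a *\<^sub>R a) = x"
  proof (rule vec_eq_iff[THEN iffD2], rule allI)
    fix i
    have "(\<Sum>a\<in>Dn \<alpha>. l a *\<^sub>R a) $ i = (\<Sum>a\<in>Dn \<alpha>. integral {0..1} (indicat_real (E a)) * a$i)"
      by (simp add: l_def)
    also have "\<dots> = (\<Sum>a\<in>Dn \<alpha>. integral {0..1} (\<lambda>t. indicat_real (E a) t * a$i))"
      using integ by (simp add: integral_mult_left)
    also have "\<dots> = integral {0..1} (\<lambda>t. \<Sum>a\<in>Dn \<alpha>. indicat_real (E a) t * a$i)"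
      using integrable_on_cmult_right[OF integ, where c="_ $ i"] by (intro integral_sum[symmetric]) (auto intro: finite_Dn)
    also have "\<dots> = integral {0..1::real} (\<lambda>t. ?v t $ i)"
    proof (rule integral_cong)
      fix t :: real
      have "(\<Sum>a\<in>Dn \<alpha>. indicat_real (E a) t * a$i) = (\<Sum>a\<in>Dn \<alpha>. if ?v t = a then a$i else 0)"
        by (rule sum.cong) (auto simp: ind)
      then show "(\<Sum>a\<in>Dn \<alpha>. indicat_real (E a) t * a$i) = ?v t $ i"
        by (simp add: finite_Dn vD)
    qed
    also have "\<dots> = integral {0..1::real} (\<lambda>t. if t \<le> px \<alpha> x i then sgx \<alpha> x i else 0)"
      by (simp add: vv_def)
    also have "\<dots> = x$i" using integral_step p01 sp by simp
    finally show "(\<Sum>a\<in>Dn \<alpha>. l a *\<^sub>R a) $ i = x$i" .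
  qed
  have le1: "l a \<le> 1" if "a \<in> Dn \<alpha>" for a
    using member_le_sum[of a "Dn \<alpha>" l] that nn finite_Dn s1 by auto
  have lP: "l \<in> Pmean \<alpha> x"
  proof -
    have "a \<notin> Dn \<alpha> \<Longrightarrow> l a = 0" for a by (simp add: l_def)
    then show ?thesis unfolding Pmean_def using nn le1 s1 sx by auto
  qed
  have supp: "\<exists>t. a = ?v t" if "a \<in> support \<alpha> l" for a
  proof (rule ccontr)
    assume "\<not> ?thesis"
    then have "E a = {}" by (auto simp: E_def)
    moreover have "indicat_real {} = (\<lambda>_::real. 0)" by (simp add: fun_eq_iff)
    ultimately have "l a = 0" by (simp add: l_def)
    then show False using that by (simp add: support_def)
  qed
  have cmp: "Dnle (?v s) (?v t)" if "t \<le> s" for t s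
    using that by (auto simp: Dnle_def Dle_def vv_def)
  have "is_chain (support \<alpha> l)"
    unfolding is_chain_def
  proof (intro ballI)
    fix a b assume "a \<in> support \<alpha> l" "b \<in> support \<alpha> l"
    then obtain t s where "a = ?v t" "b = ?v s" using supp by blast
    then show "Dnle a b \<or> Dnle b a" using cmp by (cases "t \<le> s") auto
  qed
  then show ?thesis using lP by blast
qed

theorem lemma1:
  fixes \<alpha> :: real and x :: "real^'n"
  assumes "0 < \<alpha>" and "\<alpha> \<le> 1"
    and "\<forall>i. -\<alpha> \<le> x $ i \<and> x $ i \<le> 1"
  shows "\<exists>!l. l \<in> Pmean \<alpha> x \<and> is_chain (support \<alpha> l)"
  using existence[OF assms] uniq[OF assms(1)] by blast

end
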